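(* Let $\mathcal{X},\mathcal{Y}$ be Hilbert spaces, $F:\mathcal{D}(F)\subset\mathcal{X}\to\mathcal{Y}$ a (nonlinear) operator, $y\in\mathcal{Y}$ exact data and $y^\delta\in\mathcal{Y}$ noisy data with $\|y-y^\delta\|\le\delta$. Assume: (a) $\Theta:\mathcal{X}\to(-\infty,\infty]$ is proper, weakly lower semi-continuous and $p$-convex for some $p>1$, i.e. there is $c_0>0$ with $D_\xi\Theta(\bar x,x)\ge c_0\|x-\bar x\|^p$ for all $\bar x\in\mathcal{D}(\Theta)$, $x\in\mathcal{D}(\partial\Theta)$, $\xi\in\partial\Theta(x)$; (b) there are $\rho>0$, $x_0\in\mathcal{X}$ and $\xi_0\in\partial\Theta(x_0)$ with $B_{2\rho}(x_0)\subset\mathcal{D}(F)$, and $F(x)=y$ has a solution $x^*\in\mathcal{D}(\Theta)$ with $D_{\xi_0}\Theta(x^*,x_0)\le c_0\rho^p$; (c) $F$ is continuous and weakly closed on $\mathcal{D}(F)$; (d) there is a family of bounded linear operators $\{L(x):\mathcal{X}\to\mathcal{Y}\}_{x\in B_{2\rho}(x_0)\cap\mathcal{D}(\Theta)}$ such that $x\mapsto L(x)$ is continuous on $B_{2\rho}(x_0)\cap\mathcal{D}(\Theta)$, there is $0\le\eta<1$ with $\|F(x)-F(\bar x)-L(\bar x)(x-\bar x)\|<\eta\|F(x)-F(\bar x)\|$ for all $x,\bar x\in B_{2\rho}(x_0)\cap\mathcal{D}(\Theta)$, and there is $C_0>0$ with $\|L(x)\|\le C_0$ for all $x\in B_{2\rho}(x_0)$.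 Let $(\xi^\delta(t),x^\delta(t))$ be the solution of the initial value problem $$\frac{d\xi^\delta(t)}{dt}=-L(x^\delta(t))^*(F(x^\delta(t))-y^\delta),\quad x^\delta(t)=\nabla\Theta^*(\xi^\delta(t)),\qquad \xi^\delta(0)=\xi_0,\ x^\delta(0)=x_0,$$ for $T>0$. Then $x^\delta(T)$ and the residual $\|F(x^\delta(T))-y^\delta\|$ are continuous with respect to $T$.
   Context: For a convex $\Theta$, $\partial\Theta(x)=\{\xi:\Theta(\bar x)-\Theta(x)-\langle\xi,\bar x-x\rangle\ge0\ \forall\bar x\}$, $\mathcal{D}(\Theta)=\{x:\Theta(x)<\infty\}$, $\mathcal{D}(\partial\Theta)=\{x\in\mathcal{D}(\Theta):\partial\Theta(x)\neq\emptyset\}$, and the Bregman distance is $D_\xi\Theta(\bar x,x)=\Theta(\bar x)-\Theta(x)-\langle\xi,\bar x-x\rangle$ for $\xi\in\partial\Theta(x)$. $\Theta^*(\xi)=\sup_x\{\langle\xi,x\rangle-\Theta(x)\}$ is the Legendre–Fenchel conjugate, $\nabla\Theta^*$ its gradient, $L(x)^*$ the adjoint of $L(x)$, and $B_{2\rho}(x_0)$ the closed ball of radius $2\rho$ about $x_0$. *)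

theory Defs
  imports "HOL-Analysis.Analysis"
begin

definition weak_conv :: "(nat \<Rightarrow> 'a::real_inner) \<Rightarrow> 'a \<Rightarrow> bool" where
  "weak_conv xs x \<longleftrightarrow> (\<forall>z. ((\<lambda>n. xs n \<bullet> z) \<longlongrightarrow> x \<bullet> z) sequentially)"

definition dom_fun :: "('a \<Rightarrow> ereal) \<Rightarrow> 'a set" where
  "dom_fun \<Theta> = {x. \<Theta> x < \<infinity>}"

definition proper_fun :: "('a \<Rightarrow> ereal) \<Rightarrow> bool" where
  "proper_fun \<Theta> \<longleftrightarrow> (\<forall>x. \<Theta> x \<noteq> -\<infinity>) \<and> (\<exists>x. \<Theta> x < \<infinity>)"

definition ereal_convex :: "('a::real_vector \<Rightarrow> ereal) \<Rightarrow> bool" where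
  "ereal_convex \<Theta> \<longleftrightarrow> (\<forall>x y t. 0 \<le> t \<and> t \<le> 1 \<longrightarrow>
      \<Theta> (t *\<^sub>R x + (1 - t) *\<^sub>R y) \<le> ereal t * \<Theta> x + ereal (1 - t) * \<Theta> y)"

definition weakly_lsc :: "('a::real_inner \<Rightarrow> ereal) \<Rightarrow> bool" where
  "weakly_lsc \<Theta> \<longleftrightarrow> (\<forall>xs x. weak_conv xs x \<longrightarrow> \<Theta> x \<le> liminf (\<lambda>n. \<Theta> (xs n)))"

definition subdiff :: "('a::real_inner \<Rightarrow> ereal) \<Rightarrow> 'a \<Rightarrow> 'a set" where
  "subdiff \<Theta> x = {\<xi>. \<Theta> x < \<infinity> \<and> (\<forall>x'. \<Theta> x + ereal (\<xi> \<bullet> (x' - x)) \<le> \<Theta> x')}"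

definition dom_subdiff :: "('a::real_inner \<Rightarrow> ereal) \<Rightarrow> 'a set" where
  "dom_subdiff \<Theta> = {x \<in> dom_fun \<Theta>. subdiff \<Theta> x \<noteq> {}}"

text \<open>Bregman distance (used only for finite values).\<close>
definition bregman :: "('a::real_inner \<Rightarrow> ereal) \<Rightarrow> 'a \<Rightarrow> 'a \<Rightarrow> 'a \<Rightarrow> real" where
  "bregman \<Theta> \<xi> xb x = real_of_ereal (\<Theta> xb) - real_of_ereal (\<Theta> x) - \<xi> \<bullet> (xb - x)"

definition conjugate :: "('a::real_inner \<Rightarrow> ereal) \<Rightarrow> 'a \<Rightarrow> ereal" where
  "conjugate \<Theta> \<xi> = (SUP x. ereal (\<xi> \<bullet> x) - \<Theta> x)"

text \<open>\<open>x = \<nabla>\<Theta>\<^sup>*(\<xi>)\<close>: the conjugate is finite near \<open>\<xi>\<close> and Frechet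
  differentiable at \<open>\<xi>\<close> with gradient \<open>x\<close>.\<close>
definition is_grad_conj :: "('a::real_inner \<Rightarrow> ereal) \<Rightarrow> 'a \<Rightarrow> 'a \<Rightarrow> bool" where
  "is_grad_conj \<Theta> \<xi> x \<longleftrightarrow>
     (\<forall>\<^sub>F \<eta> in nhds \<xi>. \<bar>conjugate \<Theta> \<eta>\<bar> \<noteq> \<infinity>) \<and>
     ((\<lambda>\<eta>. real_of_ereal (conjugate \<Theta> \<eta>)) has_derivative (\<lambda>h. x \<bullet> h)) (at \<xi>)"

definition weakly_closed_on :: "'a::real_inner set \<Rightarrow> ('a \<Rightarrow> 'b::real_normed_vector) \<Rightarrow> bool" where
  "weakly_closed_on D F \<longleftrightarrow> (\<forall>xs x v. (\<forall>n. xs n \<in> D) \<and> weak_conv xs x \<and> (F \<circ> xs) \<longlonglongrightarrow> v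
        \<longrightarrow> x \<in> D \<and> F x = v)"

end

theory Submission
  imports Defs
begin

lemma conj_convex:
  fixes \<Theta> :: "'a::real_inner \<Rightarrow> ereal"
  assumes nm: "\<forall>z. \<Theta> z \<noteq> -\<infinity>" and s: "0 \<le> s" "s \<le> 1"
  shows "conjugate \<Theta> (s *\<^sub>R b + (1 - s) *\<^sub>R a) \<le> ereal s * conjugate \<Theta> b + ereal (1 - s) * conjugate \<Theta> a"
  unfolding conjugate_def
proof (rule SUP_least)
  fix z
  show "ereal ((s *\<^sub>R b + (1 - s) *\<^sub>R a) \<bullet> z) - \<Theta> z \<le> ereal s * (SUP x. ereal (b \<bullet> x) - \<Theta> x) + ereal (1 - s) * (SUP x. ereal (a \<bullet> x) - \<Theta> x)"
  proof (cases "\<Theta> z")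
    case (real r)
    have 1: "ereal (b \<bullet> z - r) \<le> (SUP x. ereal (b \<bullet> x) - \<Theta> x)"
      using SUP_upper[of z UNIV "\<lambda>x. ereal (b \<bullet> x) - \<Theta> x"] real by simp
    have 2: "ereal (a \<bullet> z - r) \<le> (SUP x. ereal (a \<bullet> x) - \<Theta> x)"
      using SUP_upper[of z UNIV "\<lambda>x. ereal (a \<bullet> x) - \<Theta> x"] real by simp
    have "ereal ((s *\<^sub>R b + (1 - s) *\<^sub>R a) \<bullet> z) - \<Theta> z = ereal s * ereal (b \<bullet> z - r) + ereal (1 - s) * ereal (a \<bullet> z - r)"
      using real by (simp add: inner_add_left algebra_simps)
    also have "\<dots> \<le> ereal s * (SUP x. ereal (b \<bullet> x) - \<Theta> x) + ereal (1 - s) * (SUP x. ereal (a \<bullet> x) - \<Theta> x)"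
      by (intro add_mono ereal_mult_left_mono 1 2) (use s in auto)
    finally show ?thesis .
  next
    case PInf then show ?thesis by simp
  next
    case MInf then show ?thesis using nm by simp
  qed
qed

lemma conj_convex_real:
  fixes \<Theta> :: "'a::real_inner \<Rightarrow> ereal"
  assumes nm: "\<forall>z. \<Theta> z \<noteq> -\<infinity>" and s: "0 \<le> s" "s \<le> 1"
    and fa: "\<bar>conjugate \<Theta> a\<bar> \<noteq> \<infinity>" and fb: "\<bar>conjugate \<Theta> b\<bar> \<noteq> \<infinity>"
    and fc: "\<bar>conjugate \<Theta> (s *\<^sub>R b + (1 - s) *\<^sub>R a)\<bar> \<noteq> \<infinity>"
  shows "real_of_ereal (conjugate \<Theta> (s *\<^sub>R b + (1 - s) *\<^sub>R a)) \<le> s * real_of_ereal (conjugate \<Theta> b) + (1 - s) * real_of_ereal (conjugate \<Theta> a)"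
proof -
  obtain A where A: "conjugate \<Theta> a = ereal A" using fa by (cases "conjugate \<Theta> a") auto
  obtain B where B: "conjugate \<Theta> b = ereal B" using fb by (cases "conjugate \<Theta> b") auto
  obtain C where C: "conjugate \<Theta> (s *\<^sub>R b + (1 - s) *\<^sub>R a) = ereal C" using fc
    by (cases "conjugate \<Theta> (s *\<^sub>R b + (1 - s) *\<^sub>R a)") auto
  show ?thesis using conj_convex[OF nm s, of b a] A B C by simp
qed

lemma conj_subgrad:
  fixes \<Theta> :: "'a::real_inner \<Rightarrow> ereal"
  assumes nm: "\<forall>z. \<Theta> z \<noteq> -\<infinity>" and gr: "is_grad_conj \<Theta> a g"
    and fb: "\<bar>conjugate \<Theta> b\<bar> \<noteq> \<infinity>"
  shows "real_of_ereal (conjugate \<Theta> a) + g \<bullet> (b - a) \<le> real_of_ereal (conjugate \<Theta> b)"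
proof (rule ccontr)
  define \<phi> where "\<phi> = (\<lambda>\<eta>. real_of_ereal (conjugate \<Theta> \<eta>))"
  assume "\<not> ?thesis"
  hence gap: "\<phi> b < \<phi> a + g \<bullet> (b - a)" unfolding \<phi>_def by simp
  define d where "d = b - a"
  have dnz: "d \<noteq> 0" using gap unfolding d_def by auto
  hence nd: "norm d > 0" by simp
  define gp where "gp = \<phi> a + g \<bullet> d - \<phi> b"
  have gp: "gp > 0" using gap unfolding gp_def d_def by simp
  from gr have ev: "\<forall>\<^sub>F \<eta> in nhds a. \<bar>conjugate \<Theta> \<eta>\<bar> \<noteq> \<infinity>"
    and der: "(\<phi> has_derivative (\<lambda>h. g \<bullet> h)) (at a)"
    unfolding is_grad_conj_def \<phi>_def by auto
  obtain e where e: "e > 0" "\<forall>\<eta>. dist \<eta> a < e \<longrightarrow> \<bar>conjugate \<Theta> \<eta>\<bar> \<noteq> \<infinity>"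
    using ev unfolding eventually_nhds_metric by auto
  have fa: "\<bar>conjugate \<Theta> a\<bar> \<noteq> \<infinity>" using e by auto
  have gpd: "gp / (2 * norm d) > 0" using gp nd by simp
  obtain r where r: "r > 0" "\<forall>y. norm (y - a) < r \<longrightarrow> norm (\<phi> y - \<phi> a - g \<bullet> (y - a)) \<le> (gp / (2 * norm d)) * norm (y - a)"
    using der gpd unfolding has_derivative_at_alt by blast
  define s where "s = min 1 (min (r / (2 * norm d)) (e / (2 * norm d)))"
  have s0: "s > 0" using r e nd unfolding s_def by auto
  have s1: "s \<le> 1" unfolding s_def by auto
  have "s * norm d \<le> r / (2 * norm d) * norm d"
    by (rule mult_right_mono) (auto simp: s_def)
  also have "\<dots> = r / 2" using nd by simp
  finally have sr: "s * norm d < r" using r by simp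
  have "s * norm d \<le> e / (2 * norm d) * norm d"
    by (rule mult_right_mono) (auto simp: s_def)
  also have "\<dots> = e / 2" using nd by simp
  finally have se: "s * norm d < e" using e by simp
  define y where "y = s *\<^sub>R b + (1 - s) *\<^sub>R a"
  have ya: "y - a = s *\<^sub>R d" unfolding y_def d_def by (simp add: algebra_simps)
  have fy: "\<bar>conjugate \<Theta> y\<bar> \<noteq> \<infinity>" using e(2) ya se s0 by (simp add: dist_norm)
  have cv: "\<phi> y \<le> s * \<phi> b + (1 - s) * \<phi> a"
    unfolding \<phi>_def y_def using conj_convex_real[OF nm _ s1 fa fb] s0 fy y_def by simp
  have nya: "norm (y - a) = s * norm d" using ya s0 by simp
  have "norm (y - a) < r" using nya sr by simp
  from r(2)[rule_format, OF this]
  have "norm (\<phi> y - \<phi> a - g \<bullet> (y - a)) \<le> (gp / (2 * norm d)) * norm (y - a)" .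
  also have "\<dots> = s * gp / 2" unfolding nya using nd by (simp add: field_simps)
  finally have X: "norm (\<phi> y - \<phi> a - g \<bullet> (y - a)) \<le> s * gp / 2" .
  have ga: "g \<bullet> (y - a) = s * (g \<bullet> d)" using ya by simp
  have "- (\<phi> y - \<phi> a - g \<bullet> (y - a)) \<le> s * gp / 2" using abs_le_D2[OF X[unfolded real_norm_def]] .
  hence "\<phi> y \<ge> \<phi> a + s * (g \<bullet> d) - s * gp / 2" using ga by linarith
  with cv have "s * (g \<bullet> d) - s * gp / 2 \<le> s * (\<phi> b - \<phi> a)" by (simp add: algebra_simps)
  hence "s * (g \<bullet> d - gp / 2) \<le> s * (\<phi> b - \<phi> a)" by (simp add: algebra_simps)
  hence "g \<bullet> d - gp / 2 \<le> \<phi> b - \<phi> a" using s0 by (simp add: mult_le_cancel_left_pos)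
  hence "gp \<le> gp / 2" unfolding gp_def by (simp add: field_simps)
  thus False using gp by simp
qed


lemma grad_cont:
  fixes \<Theta> :: "'a::real_inner \<Rightarrow> ereal"
  assumes nm: "\<forall>z. \<Theta> z \<noteq> -\<infinity>" and gr: "is_grad_conj \<Theta> a g" and ep: "\<epsilon> > 0"
  shows "\<exists>\<delta>>0. \<forall>b g'. norm (b - a) < \<delta> \<longrightarrow> is_grad_conj \<Theta> b g' \<longrightarrow> norm (g' - g) \<le> \<epsilon>"
proof -
  define \<phi> where "\<phi> = (\<lambda>\<eta>. real_of_ereal (conjugate \<Theta> \<eta>))"
  from gr have ev: "\<forall>\<^sub>F \<eta> in nhds a. \<bar>conjugate \<Theta> \<eta>\<bar> \<noteq> \<infinity>"
    and der: "(\<phi> has_derivative (\<lambda>h. g \<bullet> h)) (at a)"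
    unfolding is_grad_conj_def \<phi>_def by auto
  obtain e where e: "e > 0" "\<forall>\<eta>. dist \<eta> a < e \<longrightarrow> \<bar>conjugate \<Theta> \<eta>\<bar> \<noteq> \<infinity>"
    using ev unfolding eventually_nhds_metric by auto
  have e4: "\<epsilon> / 4 > 0" using ep by simp
  obtain r where r: "r > 0" "\<forall>y. norm (y - a) < r \<longrightarrow> norm (\<phi> y - \<phi> a - g \<bullet> (y - a)) \<le> (\<epsilon> / 4) * norm (y - a)"
    using der e4 unfolding has_derivative_at_alt by blast
  define t where "t = min r e / 2"
  have t0: "t > 0" "t < r" "t < e" using r e unfolding t_def by auto
  show ?thesis
  proof (intro exI[of _ "t / 2"] conjI allI impI)
    show "t / 2 > 0" using t0 by simp
    fix b g' assume nb: "norm (b - a) < t / 2" and grb: "is_grad_conj \<Theta> b g'"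
    show "norm (g' - g) \<le> \<epsilon>"
    proof (cases "g' = g")
      case True then show ?thesis using ep by simp
    next
      case False
      define N where "N = norm (g' - g)"
      have N0: "N > 0" using False unfolding N_def by simp
      define u where "u = (1 / N) *\<^sub>R (g' - g)"
      have nu: "norm u = 1" using N0 unfolding u_def N_def by simp
      define y where "y = a + t *\<^sub>R u"
      have nya: "norm (y - a) = t" using nu t0 unfolding y_def by simp
      have fy: "\<bar>conjugate \<Theta> y\<bar> \<noteq> \<infinity>" using e(2) nya t0 by (simp add: dist_norm)
      have "\<forall>\<^sub>F \<eta> in nhds b. \<bar>conjugate \<Theta> \<eta>\<bar> \<noteq> \<infinity>" using grb unfolding is_grad_conj_def by simp
      from eventually_nhds_x_imp_x[OF this] have fb: "\<bar>conjugate \<Theta> b\<bar> \<noteq> \<infinity>" .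
      have S1: "\<phi> b + g' \<bullet> (y - b) \<le> \<phi> y" unfolding \<phi>_def by (rule conj_subgrad[OF nm grb fy])
      have S2: "\<phi> a + g \<bullet> (b - a) \<le> \<phi> b" unfolding \<phi>_def by (rule conj_subgrad[OF nm gr fb])
      have "norm (y - a) < r" using nya t0 by simp
      from r(2)[rule_format, OF this]
      have F: "norm (\<phi> y - \<phi> a - g \<bullet> (y - a)) \<le> (\<epsilon> / 4) * t" unfolding nya .
      have "g' \<bullet> (y - b) + g \<bullet> (b - a) \<le> g \<bullet> (y - a) + (\<epsilon> / 4) * t"
        using S1 S2 abs_le_D1[OF F[unfolded real_norm_def]] by linarith
      hence A: "(g' - g) \<bullet> (y - b) \<le> (\<epsilon> / 4) * t"
        by (simp add: inner_diff_left inner_diff_right algebra_simps)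
      have "(g' - g) \<bullet> (y - b) = t * ((g' - g) \<bullet> u) + (g' - g) \<bullet> (a - b)"
        unfolding y_def by (simp add: inner_diff_right inner_add_right algebra_simps)
      also have "(g' - g) \<bullet> u = N"
        using N0 unfolding u_def N_def by (simp add: power2_norm_eq_inner[symmetric] power2_eq_square)
      finally have B: "(g' - g) \<bullet> (y - b) = t * N + (g' - g) \<bullet> (a - b)" .
      have "- ((g' - g) \<bullet> (a - b)) \<le> N * norm (a - b)"
        using Cauchy_Schwarz_ineq2[of "g' - g" "a - b"] unfolding N_def by simp
      also have "\<dots> \<le> N * (t / 2)" using nb N0 by (simp add: norm_minus_commute)
      finally have C: "- ((g' - g) \<bullet> (a - b)) \<le> N * (t / 2)" .
      have "t * (N / 2) \<le> t * (\<epsilon> / 4)" using A B C by (simp add: algebra_simps)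
      hence "N / 2 \<le> \<epsilon> / 4" using t0 by (simp add: mult_le_cancel_left_pos)
      thus ?thesis using ep unfolding N_def by simp
    qed
  qed
qed

theorem lemma3p1:
  fixes \<Theta> :: "'a::{real_inner,complete_space} \<Rightarrow> ereal"
    and F :: "'a \<Rightarrow> 'b::{real_inner,complete_space}"
    and DF :: "'a set"
    and L :: "'a \<Rightarrow> ('a \<Rightarrow>\<^sub>L 'b)"
    and y y\<delta> :: 'b
    and \<delta> p c0 \<rho> \<eta> C0 :: real
    and x0 \<xi>0 xstar :: 'a
    and \<xi> x :: "real \<Rightarrow> 'a"
  assumes data: "norm (y - y\<delta>) \<le> \<delta>"
    and proper: "proper_fun \<Theta>"
    and convex: "ereal_convex \<Theta>"
    and wlsc: "weakly_lsc \<Theta>"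
    and p_gt: "p > 1"
    and c0_pos: "c0 > 0"
    and p_convex: "\<forall>xb \<in> dom_fun \<Theta>. \<forall>xx \<in> dom_subdiff \<Theta>. \<forall>\<zeta> \<in> subdiff \<Theta> xx.
                      bregman \<Theta> \<zeta> xb xx \<ge> c0 * norm (xx - xb) powr p"
    and rho_pos: "\<rho> > 0"
    and xi0: "\<xi>0 \<in> subdiff \<Theta> x0"
    and ball_sub: "cball x0 (2 * \<rho>) \<subseteq> DF"
    and xstar_D: "xstar \<in> DF" and xstar_dom: "xstar \<in> dom_fun \<Theta>"
    and xstar_sol: "F xstar = y"
    and xstar_breg: "bregman \<Theta> \<xi>0 xstar x0 \<le> c0 * \<rho> powr p"
    and F_cont: "continuous_on DF F"
    and F_wclosed: "weakly_closed_on DF F"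
    and L_cont: "continuous_on (cball x0 (2 * \<rho>) \<inter> dom_fun \<Theta>) L"
    and eta: "0 \<le> \<eta>" "\<eta> < 1"
    and tcc: "\<forall>xa \<in> cball x0 (2 * \<rho>) \<inter> dom_fun \<Theta>. \<forall>xb \<in> cball x0 (2 * \<rho>) \<inter> dom_fun \<Theta>.
                 norm (F xa - F xb - blinfun_apply (L xb) (xa - xb)) \<le> \<eta> * norm (F xa - F xb)"
    and C0_pos: "C0 > 0"
    and L_bound: "\<forall>xa \<in> cball x0 (2 * \<rho>) \<inter> dom_fun \<Theta>. norm (L xa) \<le> C0"
    and sol_in: "\<forall>t \<ge> 0. x t \<in> cball x0 (2 * \<rho>)"
    and ode: "\<forall>t \<ge> 0. (\<xi> has_vector_derivative
                  (- adjoint (blinfun_apply (L (x t))) (F (x t) - y\<delta>))) (at t within {0..})"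
    and grad: "\<forall>t \<ge> 0. is_grad_conj \<Theta> (\<xi> t) (x t)"
    and init: "\<xi> 0 = \<xi>0" "x 0 = x0"
  shows "continuous_on {0<..} x \<and> continuous_on {0<..} (\<lambda>T. norm (F (x T) - y\<delta>))"
proof -
  have nm: "\<forall>z. \<Theta> z \<noteq> -\<infinity>" using proper unfolding proper_fun_def by simp
  have xicont: "continuous_on {0..} \<xi>"
    by (rule continuous_on_vector_derivative) (use ode in auto)
  have xc: "continuous_on {0<..} x"
    unfolding continuous_on_iff
  proof (intro ballI allI impI)
    fix t e :: real assume t: "t \<in> {0<..}" and e: "e > 0"
    have gt: "is_grad_conj \<Theta> (\<xi> t) (x t)" using grad t by auto
    have e2: "e / 2 > 0" using e by simp
    obtain d where d: "d > 0" "\<forall>b g'. norm (b - \<xi> t) < d \<longrightarrow> is_grad_conj \<Theta> b g' \<longrightarrow> norm (g' - x t) \<le> e / 2"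
      using grad_cont[OF nm gt e2] by blast
    have t0: "t \<in> {0..}" using t by simp
    obtain d' where d': "d' > 0" "\<forall>s\<in>{0..}. dist s t < d' \<longrightarrow> dist (\<xi> s) (\<xi> t) < d"
      using xicont d(1) t0 unfolding continuous_on_iff by blast
    show "\<exists>\<delta>>0. \<forall>s\<in>{0<..}. dist s t < \<delta> \<longrightarrow> dist (x s) (x t) < e"
    proof (intro exI[of _ d'] conjI ballI impI)
      fix s :: real assume s: "s \<in> {0<..}" "dist s t < d'"
      have "dist (\<xi> s) (\<xi> t) < d" using d' s by auto
      moreover have "is_grad_conj \<Theta> (\<xi> s) (x s)" using grad s by auto
      ultimately have "norm (x s - x t) \<le> e / 2" using d(2) by (simp add: dist_norm)
      thus "dist (x s) (x t) < e" using e by (simp add: dist_norm)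
    qed (use d' in auto)
  qed
  have "continuous_on {0<..} (\<lambda>T. F (x T))"
    by (rule continuous_on_compose2[OF F_cont xc]) (use sol_in ball_sub in auto)
  hence "continuous_on {0<..} (\<lambda>T. norm (F (x T) - y\<delta>))" by (intro continuous_intros)
  with xc show ?thesis by simp
qed

end
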